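(* Let $\mathcal M=(M,<,\ldots)$ be a definably complete locally o-minimal structure and let $\{X\langle r\rangle\}_{r>0}$ be a definable increasing family of subsets of $M^n$. Then $\dim\left(\bigcup_{r>0}X\langle r\rangle\right)=\sup\{\dim X\langle r\rangle : r>0\}$.
   Context: $\mathcal M$ is an expansion of a dense linear order without endpoints with a distinguished element $0$; definable = with parameters. Definably complete: every definable subset of $M$ has sup and inf in $M\cup\{\pm\infty\}$. Locally o-minimal: for every definable $X\subseteq M$ and $a\in M$ there is an open interval $I\ni a$ with $X\cap I$ a finite union of points and open intervals. A definable increasing family $\{X\langle r\rangle\}_{r>0}$ is a family of fibers $X\langle r\rangle=\{x:(r,x)\in\mathcal X\}$ of a definable set $\mathcal X\subseteq M^{1+n}$ with $X\langle r\rangle\subseteq X\langle r'\rangle$ whenever $0<r<r'$. The dimension of a nonempty definable $X\subseteq M^n$ is the maximal $d$ such that $\pi(X)$ has nonempty interior for some coordinate projection $\pi:M^n\to M^d$ ($M^0$ a point); $\dim\emptyset=-\infty$. *)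

theory Defs
  imports "HOL-Library.Extended_Real"
begin

text \<open>Points of M^n are lists of length n. A "structure" on M (van den Dries,
Tame Topology, Ch. 1) is a sequence D n of collections of subsets of M^n closed
under Boolean operations, cylinders, diagonals and projections. The sets definable
with parameters in a first-order expansion of (M,<) are exactly such a sequence
which moreover contains the order relation and all singletons (parameters).\<close>

definition is_structure :: "(nat \<Rightarrow> 'a::linorder list set set) \<Rightarrow> bool" where
  "is_structure D \<longleftrightarrow>
     (\<forall>n. \<forall>A\<in>D n. A \<subseteq> {x. length x = n}) \<and>
     (\<forall>n. {x. length x = n} \<in> D n) \<and>
     (\<forall>n. \<forall>A\<in>D n. \<forall>B\<in>D n. A \<union> B \<in> D n) \<and>
     (\<forall>n. \<forall>A\<in>D n. {x. length x = n} - A \<in> D n) \<and>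
     (\<forall>n. \<forall>A\<in>D n. {a # y |a y. y \<in> A} \<in> D (Suc n)) \<and>
     (\<forall>n. \<forall>A\<in>D n. {y @ [a] |a y. y \<in> A} \<in> D (Suc n)) \<and>
     (\<forall>n i j. i < n \<longrightarrow> j < n \<longrightarrow> {x. length x = n \<and> x ! i = x ! j} \<in> D n) \<and>
     (\<forall>n. \<forall>A\<in>D (Suc n). butlast ` A \<in> D n)"

definition is_expansion_defsets :: "(nat \<Rightarrow> 'a::linorder list set set) \<Rightarrow> bool" where
  "is_expansion_defsets D \<longleftrightarrow> is_structure D \<and>
     {[x, y] |x y. x < y} \<in> D 2 \<and> (\<forall>a. {[a]} \<in> D 1)"

definition definably_complete :: "(nat \<Rightarrow> 'a::linorder list set set) \<Rightarrow> bool" where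
  "definably_complete D \<longleftrightarrow> (\<forall>A\<in>D 1.
     let S = {a. [a] \<in> A} in
       (S \<noteq> {} \<and> bdd_above S \<longrightarrow> (\<exists>s. (\<forall>x\<in>S. x \<le> s) \<and> (\<forall>t. (\<forall>x\<in>S. x \<le> t) \<longrightarrow> s \<le> t))) \<and>
       (S \<noteq> {} \<and> bdd_below S \<longrightarrow> (\<exists>s. (\<forall>x\<in>S. s \<le> x) \<and> (\<forall>t. (\<forall>x\<in>S. t \<le> x) \<longrightarrow> t \<le> s))))"

definition locally_o_minimal :: "(nat \<Rightarrow> 'a::linorder list set set) \<Rightarrow> bool" where
  "locally_o_minimal D \<longleftrightarrow> (\<forall>A\<in>D 1. \<forall>a.
     \<exists>b c. b < a \<and> a < c \<and>
       (\<exists>P Q. finite P \<and> finite Q \<and>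
          {x. [x] \<in> A} \<inter> {b<..<c} = P \<union> (\<Union>(u, v)\<in>Q. {u<..<v})))"

definition fiber :: "'a list set \<Rightarrow> 'a \<Rightarrow> 'a list set" where
  "fiber XX r = {x. r # x \<in> XX}"

text \<open>A subset of M^d has nonempty interior (order/product topology) iff it
contains an open box.\<close>
definition has_interior :: "nat \<Rightarrow> 'a::linorder list set \<Rightarrow> bool" where
  "has_interior d Y \<longleftrightarrow> (\<exists>a b. length a = d \<and> length b = d \<and> (\<forall>k<d. a ! k < b ! k) \<and>
      {y. length y = d \<and> (\<forall>k<d. a ! k < y ! k \<and> y ! k < b ! k)} \<subseteq> Y)"

definition coord_proj :: "nat list \<Rightarrow> 'a list \<Rightarrow> 'a list" where
  "coord_proj is x = map (\<lambda>i. x ! i) is"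

definition proj_indices :: "nat \<Rightarrow> nat \<Rightarrow> nat list set" where
  "proj_indices n d = {is. length is = d \<and> sorted_wrt (<) is \<and> (\<forall>i\<in>set is. i < n)}"

definition dim :: "nat \<Rightarrow> 'a::linorder list set \<Rightarrow> ereal" where
  "dim n X = (if X = {} then -\<infinity> else
     ereal (of_nat (Max {d. \<exists>is\<in>proj_indices n d. has_interior d (coord_proj is ` X)})))"

end

theory Submission
  imports Defs
begin



datatype 'a fm = Rel "'a list set" "nat list" | Neg "'a fm" | Disj "'a fm" "'a fm" | FEx "'a fm"

primrec ev :: "'a fm \<Rightarrow> 'a list \<Rightarrow> bool" where
  "ev (Rel A is) xs = (map (nth xs) is \<in> A)"
| "ev (Neg f) xs = (\<not> ev f xs)"
| "ev (Disj f g) xs = (ev f xs \<or> ev g xs)"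
| "ev (FEx f) xs = (\<exists>v. ev f (xs @ [v]))"

primrec ok :: "(nat \<Rightarrow> 'a list set set) \<Rightarrow> nat \<Rightarrow> 'a fm \<Rightarrow> bool" where
  "ok D n (Rel A is) = (A \<in> D (length is) \<and> (\<forall>i\<in>set is. i < n))"
| "ok D n (Neg f) = ok D n f"
| "ok D n (Disj f g) = (ok D n f \<and> ok D n g)"
| "ok D n (FEx f) = ok D (Suc n) f"

definition FConj where "FConj f g = Neg (Disj (Neg f) (Neg g))"
definition FAll where "FAll f = Neg (FEx (Neg f))"
definition FImp where "FImp f g = Disj (Neg f) g"

lemma ev_derived[simp]: "ev (FConj f g) xs = (ev f xs \<and> ev g xs)"
  "ev (FAll f) xs = (\<forall>v. ev f (xs @ [v]))" "ev (FImp f g) xs = (ev f xs \<longrightarrow> ev g xs)"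
  by (auto simp: FConj_def FAll_def FImp_def)

lemma ok_derived[simp]: "ok D n (FConj f g) = (ok D n f \<and> ok D n g)"
  "ok D n (FAll f) = ok D (Suc n) f" "ok D n (FImp f g) = (ok D n f \<and> ok D n g)"
  by (auto simp: FConj_def FAll_def FImp_def)

context fixes D :: "nat \<Rightarrow> 'a::linorder list set set" assumes S: "is_structure D"
begin

lemma SP1: "\<forall>n. \<forall>A\<in>D n. A \<subseteq> {x. length x = n}"
  using S[unfolded is_structure_def] by (elim conjE) assumption

lemma SP2: "\<forall>n. {x. length x = n} \<in> D n"
  using S[unfolded is_structure_def] by (elim conjE) assumption

lemma SP3: "\<forall>n. \<forall>A\<in>D n. \<forall>B\<in>D n. A \<union> B \<in> D n"
  using S[unfolded is_structure_def] by (elim conjE) assumption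

lemma SP4: "\<forall>n. \<forall>A\<in>D n. {x. length x = n} - A \<in> D n"
  using S[unfolded is_structure_def] by (elim conjE) assumption

lemma SP5: "\<forall>n. \<forall>A\<in>D n. {a # y |a y. y \<in> A} \<in> D (Suc n)"
  using S[unfolded is_structure_def] by (elim conjE) assumption

lemma SP6: "\<forall>n i j. i < n \<longrightarrow> j < n \<longrightarrow> {x. length x = n \<and> x ! i = x ! j} \<in> D n"
  using S[unfolded is_structure_def] by (elim conjE) assumption

lemma SP7: "\<forall>n. \<forall>A\<in>D (Suc n). butlast ` A \<in> D n"
  using S[unfolded is_structure_def] by (elim conjE) assumption

lemma D_len: "A \<in> D n \<Longrightarrow> xs \<in> A \<Longrightarrow> length xs = n"
  using SP1 by blast

lemma D_univ: "{x. length x = n} \<in> D n"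
  using SP2 by blast

lemma D_un: "A \<in> D n \<Longrightarrow> B \<in> D n \<Longrightarrow> A \<union> B \<in> D n"
  using SP3 by blast

lemma D_compl: "A \<in> D n \<Longrightarrow> {x. length x = n} - A \<in> D n"
  using SP4 by blast

lemma D_int: assumes "A \<in> D n" "B \<in> D n" shows "A \<inter> B \<in> D n"
proof -
  have "A \<inter> B = {x. length x = n} - (({x. length x = n} - A) \<union> ({x. length x = n} - B))"
    using D_len assms by blast
  thus ?thesis using assms D_un D_compl by metis
qed

lemma D_consL: "A \<in> D n \<Longrightarrow> {a # y |a y. y \<in> A} \<in> D (Suc n)"
  using SP5 by blast

lemma D_diag: "i < n \<Longrightarrow> j < n \<Longrightarrow> {x. length x = n \<and> x ! i = x ! j} \<in> D n"
  using SP6 by blast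

lemma D_butlast: "A \<in> D (Suc n) \<Longrightarrow> butlast ` A \<in> D n"
  using SP7 by blast

lemma D_cylL: "A \<in> D n \<Longrightarrow> {u @ y |u y. length u = m \<and> y \<in> A} \<in> D (m + n)"
proof (induction m)
  case 0 thus ?case by simp
next
  case (Suc m)
  have "{u @ y |u y. length u = Suc m \<and> y \<in> A} = {a # w |a w. w \<in> {u @ y |u y. length u = m \<and> y \<in> A}}"
  proof (intro equalityI subsetI)
    fix x assume "x \<in> {u @ y |u y. length u = Suc m \<and> y \<in> A}"
    then obtain u y where u: "x = u @ y" "length u = Suc m" "y \<in> A" by blast
    then obtain a u' where "u = a # u'" "length u' = m" by (metis length_Suc_conv)
    thus "x \<in> {a # w |a w. w \<in> {u @ y |u y. length u = m \<and> y \<in> A}}" using u by auto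
  next
    fix x assume "x \<in> {a # w |a w. w \<in> {u @ y |u y. length u = m \<and> y \<in> A}}"
    then obtain a u y where u: "x = a # (u @ y)" "length u = m" "y \<in> A" by blast
    hence "x = (a # u) @ y" "length (a # u) = Suc m" by auto
    thus "x \<in> {u @ y |u y. length u = Suc m \<and> y \<in> A}" using u(3) by blast
  qed
  thus ?case using D_consL[OF Suc.IH[OF Suc.prems]] by simp
qed

lemma D_take: "A \<in> D (n + k) \<Longrightarrow> take n ` A \<in> D n"
proof (induction k arbitrary: A)
  case 0
  have "take n ` A = A" using D_len[OF 0[simplified]] by (auto simp: image_iff)
  thus ?case using 0 by simp
next
  case (Suc k)
  have "butlast ` A \<in> D (n + k)" using D_butlast Suc.prems by simp
  hence "take n ` butlast ` A \<in> D n" by (rule Suc.IH)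
  moreover have "take n ` butlast ` A = take n ` A"
  proof -
    have "take n (butlast xs) = take n xs" if "xs \<in> A" for xs
      using D_len[OF Suc.prems that] by (simp add: butlast_conv_take min_def)
    thus ?thesis by (auto simp: image_iff)
  qed
  ultimately show ?case by simp
qed

lemma D_INT: "(\<And>j. j < (k::nat) \<Longrightarrow> B j \<in> D m) \<Longrightarrow> {x. length x = m \<and> (\<forall>j<k. x \<in> B j)} \<in> D m"
proof (induction k)
  case 0 thus ?case using D_univ by simp
next
  case (Suc k)
  have "{x. length x = m \<and> (\<forall>j<Suc k. x \<in> B j)} = {x. length x = m \<and> (\<forall>j<k. x \<in> B j)} \<inter> B k"
    using less_Suc_eq by auto
  thus ?case using Suc D_int by simp
qed

lemma D_sub: assumes A: "A \<in> D k" and L: "length is = k" and I: "\<forall>i\<in>set is. i < n"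
  shows "{xs. length xs = n \<and> map (nth xs) is \<in> A} \<in> D n"
proof -
  define C where "C = {u @ y |u y. length u = n \<and> y \<in> A}"
  have C: "C \<in> D (n + k)" unfolding C_def by (rule D_cylL[OF A])
  define T where "T = C \<inter> {x. length x = n + k \<and> (\<forall>j<k. x \<in> {x. length x = n + k \<and> x ! (n + j) = x ! (is ! j)})}"
  have "T \<in> D (n + k)" unfolding T_def
    apply (rule D_int[OF C])
    apply (rule D_INT)
    apply (rule D_diag)
    using I L nth_mem by fastforce+
  hence "take n ` T \<in> D n" by (rule D_take)
  moreover have "take n ` T = {xs. length xs = n \<and> map (nth xs) is \<in> A}"
  proof (intro equalityI subsetI)
    fix xs assume "xs \<in> take n ` T"
    then obtain x where x: "x \<in> T" "xs = take n x" by blast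
    from x(1) have "x \<in> C" unfolding T_def by blast
    then obtain u y where u: "length u = n" "y \<in> A" "x = u @ y" unfolding C_def by blast
    from x(1) have dg: "\<forall>j<k. x ! (n + j) = x ! (is ! j)" unfolding T_def by blast
    have ly: "length y = k" using D_len[OF A u(2)] .
    have "y = map (nth u) is"
    proof (rule nth_equalityI)
      show "length y = length (map (nth u) is)" using ly L by simp
    next
      fix j assume "j < length y"
      hence j: "j < k" using ly by simp
      have ij: "is ! j < n" using I L j nth_mem[of j "is"] by auto
      have "y ! j = x ! (n + j)" using u(1,3) by (simp add: nth_append)
      also have "\<dots> = x ! (is ! j)" using dg j by blast
      also have "\<dots> = u ! (is ! j)" using u(1,3) ij by (simp add: nth_append)
      finally show "y ! j = map (nth u) is ! j" using j L by simp
    qed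
    thus "xs \<in> {xs. length xs = n \<and> map (nth xs) is \<in> A}" using u x(2) by simp
  next
    fix xs assume xs: "xs \<in> {xs. length xs = n \<and> map (nth xs) is \<in> A}"
    have lx: "length xs = n" using xs by simp
    have "xs @ map (nth xs) is \<in> C" unfolding C_def using xs by blast
    moreover have "length (xs @ map (nth xs) is) = n + k" using lx L by simp
    moreover have "\<forall>j<k. (xs @ map (nth xs) is) ! (n + j) = (xs @ map (nth xs) is) ! (is ! j)"
    proof (intro allI impI)
      fix j assume j: "j < k"
      have ij: "is ! j < n" using I L j nth_mem[of j "is"] by auto
      show "(xs @ map (nth xs) is) ! (n + j) = (xs @ map (nth xs) is) ! (is ! j)"
        using lx ij j L by (simp add: nth_append)
    qed
    ultimately have "xs @ map (nth xs) is \<in> T" unfolding T_def by blast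
    moreover have "take n (xs @ map (nth xs) is) = xs" using xs by simp
    ultimately show "xs \<in> take n ` T" by (metis image_eqI)
  qed
  ultimately show ?thesis by simp
qed

theorem defset: "ok D n f \<Longrightarrow> {xs. length xs = n \<and> ev f xs} \<in> D n"
proof (induction f arbitrary: n)
  case (Rel A "is") thus ?case using D_sub[of A "length is" "is" n] by simp
next
  case (Neg f)
  have "{xs. length xs = n \<and> ev (Neg f) xs} = {x. length x = n} - {xs. length xs = n \<and> ev f xs}" by auto
  thus ?case using Neg D_compl by simp
next
  case (Disj f g)
  have "{xs. length xs = n \<and> ev (Disj f g) xs} = {xs. length xs = n \<and> ev f xs} \<union> {xs. length xs = n \<and> ev g xs}" by auto
  thus ?case using Disj D_un by simp
next
  case (FEx f)
  have "butlast ` {xs. length xs = Suc n \<and> ev f xs} = {xs. length xs = n \<and> ev (FEx f) xs}"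
  proof (intro equalityI subsetI)
    fix xs assume "xs \<in> butlast ` {xs. length xs = Suc n \<and> ev f xs}"
    then obtain ys where "length ys = Suc n" "ev f ys" "xs = butlast ys" by auto
    thus "xs \<in> {xs. length xs = n \<and> ev (FEx f) xs}"
      by (cases ys rule: rev_cases) auto
  next
    fix xs assume "xs \<in> {xs. length xs = n \<and> ev (FEx f) xs}"
    then obtain v where "length xs = n" "ev f (xs @ [v])" by auto
    thus "xs \<in> butlast ` {xs. length xs = Suc n \<and> ev f xs}"
      by (metis (mono_tags, lifting) butlast_snoc image_eqI length_append_singleton mem_Collect_eq)
  qed
  thus ?case using D_butlast FEx by fastforce
qed

end



lemma LF:
  fixes x :: "'a::linorder"
  assumes "finite P" "b < x" "x < c" "X \<inter> {b<..<c} \<subseteq> P"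
  shows "\<exists>q>x. \<forall>t. x < t \<and> t < q \<longrightarrow> t \<notin> X"
proof -
  define q where "q = Min (insert c {t\<in>P. x < t})"
  have fin: "finite (insert c {t\<in>P. x < t})" using assms(1) by simp
  have qx: "q > x" unfolding q_def using fin assms(3) by (subst Min_gr_iff) auto
  have "t \<notin> X" if "x < t" "t < q" for t
  proof
    assume "t \<in> X"
    have "t < c" using that fin unfolding q_def by (meson Min_le insertI1 less_le_trans)
    hence "t \<in> P" using assms(2,4) \<open>t \<in> X\<close> that(1) by auto
    hence "q \<le> t" unfolding q_def using fin that(1) by (intro Min_le) auto
    thus False using that(2) by simp
  qed
  thus ?thesis using qx by blast
qed

lemma AC_right:
  fixes x :: "'a::linorder"
  assumes "finite P" "finite Q" "b < x" "x < c" "X \<inter> {b<..<c} = P \<union> (\<Union>(u, v)\<in>Q. {u<..<v})"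
    and acc: "\<forall>q>x. \<exists>t. x < t \<and> t < q \<and> t \<in> X"
  shows "\<exists>q>x. \<forall>t. x < t \<and> t < q \<longrightarrow> t \<in> X"
proof -
  define K where "K = insert c ({t\<in>P. x < t} \<union> {u. \<exists>v. (u, v) \<in> Q \<and> x < u})"
  have "{u. \<exists>v. (u, v) \<in> Q \<and> x < u} \<subseteq> fst ` Q" by force
  hence "finite {u. \<exists>v. (u, v) \<in> Q \<and> x < u}" using finite_subset finite_imageI[OF assms(2)] by blast
  hence fin: "finite K" unfolding K_def using assms(1) by simp
  define q0 where "q0 = Min K"
  have qx: "q0 > x" unfolding q0_def using fin assms(4) by (subst Min_gr_iff) (auto simp: K_def)
  have q0c: "q0 \<le> c" unfolding q0_def using fin by (simp add: K_def)
  obtain t where t: "x < t" "t < q0" "t \<in> X" using acc qx by blast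
  have "t \<in> {b<..<c}" using t q0c assms(3) by auto
  hence "t \<in> P \<union> (\<Union>(u, v)\<in>Q. {u<..<v})" using assms(5) t(3) by blast
  moreover have "t \<notin> P"
  proof
    assume "t \<in> P" hence "q0 \<le> t" unfolding q0_def using fin t(1) by (intro Min_le) (auto simp: K_def)
    thus False using t(2) by simp
  qed
  ultimately obtain u v where uv: "(u, v) \<in> Q" "u < t" "t < v" by auto
  have ux: "u \<le> x"
  proof (rule ccontr)
    assume "\<not> u \<le> x" hence "x < u" by simp
    hence "q0 \<le> u" unfolding q0_def using fin uv(1) by (intro Min_le) (auto simp: K_def)
    thus False using uv(2) t(2) by simp
  qed
  define q where "q = min v q0"
  have "q > x" using uv t qx unfolding q_def by simp
  moreover have "t' \<in> X" if "x < t'" "t' < q" for t'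
  proof -
    have "t' \<in> {u<..<v}" using that ux unfolding q_def by auto
    hence "t' \<in> P \<union> (\<Union>(u, v)\<in>Q. {u<..<v})" using uv(1) by blast
    moreover have "t' \<in> {b<..<c}" using that q0c assms(3) unfolding q_def by auto
    ultimately show ?thesis using assms(5) by blast
  qed
  ultimately show ?thesis by blast
qed

lemma AC_left:
  fixes x :: "'a::linorder"
  assumes "finite P" "finite Q" "b < x" "x < c" "X \<inter> {b<..<c} = P \<union> (\<Union>(u, v)\<in>Q. {u<..<v})"
    and acc: "\<forall>q<x. \<exists>t. q < t \<and> t < x \<and> t \<in> X"
  shows "\<exists>q<x. \<forall>t. q < t \<and> t < x \<longrightarrow> t \<in> X"
proof -
  define K where "K = insert b ({t\<in>P. t < x} \<union> {v. \<exists>u. (u, v) \<in> Q \<and> v < x})"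
  have "{v. \<exists>u. (u, v) \<in> Q \<and> v < x} \<subseteq> snd ` Q" by force
  hence "finite {v. \<exists>u. (u, v) \<in> Q \<and> v < x}" using finite_subset finite_imageI[OF assms(2)] by blast
  hence fin: "finite K" unfolding K_def using assms(1) by simp
  define q0 where "q0 = Max K"
  have qx: "q0 < x" unfolding q0_def using fin assms(3) by (subst Max_less_iff) (auto simp: K_def)
  have q0c: "b \<le> q0" unfolding q0_def using fin by (simp add: K_def)
  obtain t where t: "q0 < t" "t < x" "t \<in> X" using acc qx by blast
  have "t \<in> {b<..<c}" using t q0c assms(4) by auto
  hence "t \<in> P \<union> (\<Union>(u, v)\<in>Q. {u<..<v})" using assms(5) t(3) by blast
  moreover have "t \<notin> P"
  proof
    assume "t \<in> P" hence "t \<le> q0" unfolding q0_def using fin t(2) by (intro Max_ge) (auto simp: K_def)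
    thus False using t(1) by simp
  qed
  ultimately obtain u v where uv: "(u, v) \<in> Q" "u < t" "t < v" by auto
  have ux: "x \<le> v"
  proof (rule ccontr)
    assume "\<not> x \<le> v" hence "v < x" by simp
    hence "v \<le> q0" unfolding q0_def using fin uv(1) by (intro Max_ge) (auto simp: K_def)
    thus False using uv(3) t(1) by simp
  qed
  define q where "q = max u q0"
  have "q < x" using uv t qx unfolding q_def by simp
  moreover have "t' \<in> X" if "q < t'" "t' < x" for t'
  proof -
    have "t' \<in> {u<..<v}" using that ux unfolding q_def by auto
    hence "t' \<in> P \<union> (\<Union>(u, v)\<in>Q. {u<..<v})" using uv(1) by blast
    moreover have "t' \<in> {b<..<c}" using that q0c assms(4) unfolding q_def by auto
    ultimately show ?thesis using assms(5) by blast
  qed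
  ultimately show ?thesis by blast
qed




definition lc :: "'a::linorder option \<Rightarrow> 'a \<Rightarrow> bool" where
  "lc c x = (case c of None \<Rightarrow> True | Some d \<Rightarrow> x < d)"

definition "LTs = {[x, y] |x y. (x::'a::linorder) < y}"
definition "LTa a = {[x] |x. (x::'a::linorder) < a}"
definition "GTa a = {[x] |x. a < (x::'a::linorder)}"
definition "LCs c = {[x] |x. lc c x}"

definition "fLt i j = Rel LTs [i, j]"
definition "fEq i a = Rel {[a]} [i]"
definition "fLtc i a = Rel (LTa a) [i]"
definition "fGtc i a = Rel (GTa a) [i]"
definition "fLc c i = Rel (LCs c) [i]"

lemma ev_atoms[simp]:
  "ev (fLt i j) xs = (xs ! i < xs ! j)"
  "ev (fEq i a) xs = (xs ! i = a)"
  "ev (fLtc i a) xs = (xs ! i < a)"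
  "ev (fGtc i a) xs = (a < xs ! i)"
  "ev (fLc c i) xs = lc c (xs ! i)"
  by (auto simp: fLt_def LTs_def fEq_def fLtc_def LTa_def fGtc_def GTa_def fLc_def LCs_def)

locale lom =
  fixes D :: "nat \<Rightarrow> 'a::{dense_linorder,no_top,no_bot} list set set"
  assumes EX: "is_expansion_defsets D" and DC: "definably_complete D" and LO: "locally_o_minimal D"
begin

lemma S: "is_structure D" using EX unfolding is_expansion_defsets_def by blast

lemma LTs_D: "LTs \<in> D 2" using EX unfolding is_expansion_defsets_def LTs_def by blast
lemma LTs_D2: "LTs \<in> D (Suc (Suc 0))" using LTs_D by (simp add: numeral_2_eq_2)
lemma PT_D: "{[a]} \<in> D 1" using EX unfolding is_expansion_defsets_def by blast

lemma defs: "ok D n f \<Longrightarrow> {xs. length xs = n \<and> ev f xs} \<in> D n"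
  using defset[OF S] .

lemma one_set: "{xs. length xs = Suc 0 \<and> P xs} = {[x] |x. P [x]}"
  by (auto simp: length_Suc_conv)

lemma LTa_D: "LTa a \<in> D 1"
proof -
  have "ok D 1 (FEx (FConj (fLt 0 1) (fEq 1 a)))" using LTs_D2 PT_D by (simp add: fLt_def fEq_def)
  from defs[OF this] have "{xs. length xs = 1 \<and> ev (FEx (FConj (fLt 0 1) (fEq 1 a))) xs} \<in> D 1" .
  moreover have "{xs. length xs = 1 \<and> ev (FEx (FConj (fLt 0 1) (fEq 1 a))) xs} = LTa a"
    unfolding LTa_def by (auto simp: length_Suc_conv)
  ultimately show ?thesis by simp
qed

lemma GTa_D: "GTa a \<in> D 1"
proof -
  have "ok D 1 (FEx (FConj (fLt 1 0) (fEq 1 a)))" using LTs_D2 PT_D by (simp add: fLt_def fEq_def)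
  from defs[OF this] have "{xs. length xs = 1 \<and> ev (FEx (FConj (fLt 1 0) (fEq 1 a))) xs} \<in> D 1" .
  moreover have "{xs. length xs = 1 \<and> ev (FEx (FConj (fLt 1 0) (fEq 1 a))) xs} = GTa a"
    unfolding GTa_def by (auto simp: length_Suc_conv)
  ultimately show ?thesis by simp
qed

lemma LCs_D: "LCs c \<in> D 1"
proof (cases c)
  case None
  have "LCs c = {x. length x = 1}" unfolding LCs_def None lc_def by (auto simp: length_Suc_conv)
  thus ?thesis using D_univ[OF S] by simp
next
  case (Some d)
  have "LCs c = LTa d" unfolding LCs_def LTa_def Some lc_def by simp
  thus ?thesis using LTa_D by simp
qed

lemma ok_atoms[simp]:
  "ok D n (fLt i j) = (i < n \<and> j < n)"
  "ok D n (fEq i a) = (i < n)"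
  "ok D n (fLtc i a) = (i < n)"
  "ok D n (fGtc i a) = (i < n)"
  "ok D n (fLc c i) = (i < n)"
  using LTs_D2 PT_D LTa_D GTa_D LCs_D
  by (auto simp: fLt_def fEq_def fLtc_def fGtc_def fLc_def)

lemma lo_set:
  assumes "ok D 1 f"
  shows "\<exists>b c P Q. b < x \<and> x < c \<and> finite P \<and> finite Q \<and>
          {t. ev f [t]} \<inter> {b<..<c} = P \<union> (\<Union>(u, v)\<in>Q. {u<..<v})"
proof -
  have A: "{xs. length xs = 1 \<and> ev f xs} \<in> D 1" using defs[OF assms] .
  have "{t. [t] \<in> {xs. length xs = 1 \<and> ev f xs}} = {t. ev f [t]}" by simp
  have "\<forall>A\<in>D 1. \<forall>a. \<exists>b c. b < a \<and> a < c \<and> (\<exists>P Q. finite P \<and> finite Q \<and>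
          {x. [x] \<in> A} \<inter> {b<..<c} = P \<union> (\<Union>(u, v)\<in>Q. {u<..<v}))"
    using LO unfolding locally_o_minimal_def .
  from this[rule_format, OF A, of x] show ?thesis unfolding \<open>{t. [t] \<in> {xs. length xs = 1 \<and> ev f xs}} = {t. ev f [t]}\<close> by blast
qed

lemma dc_glb:
  assumes "ok D 1 f" "t0 \<in> {t. ev f [t]}" "\<forall>t\<in>{t. ev f [t]}. m0 \<le> t"
  shows "\<exists>m. (\<forall>t\<in>{t. ev f [t]}. m \<le> t) \<and> (\<forall>m'. (\<forall>t\<in>{t. ev f [t]}. m' \<le> t) \<longrightarrow> m' \<le> m)"
proof -
  have A: "{xs. length xs = 1 \<and> ev f xs} \<in> D 1" using defs[OF assms(1)] .
  have e: "{t. [t] \<in> {xs. length xs = 1 \<and> ev f xs}} = {t. ev f [t]}" by simp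
  have "{t. ev f [t]} \<noteq> {} \<and> bdd_below {t. ev f [t]}" using assms(2,3) by (auto simp: bdd_below_def)
  have "\<forall>A\<in>D 1. let S = {a. [a] \<in> A} in
       (S \<noteq> {} \<and> bdd_above S \<longrightarrow> (\<exists>s. (\<forall>x\<in>S. x \<le> s) \<and> (\<forall>t. (\<forall>x\<in>S. x \<le> t) \<longrightarrow> s \<le> t))) \<and>
       (S \<noteq> {} \<and> bdd_below S \<longrightarrow> (\<exists>s. (\<forall>x\<in>S. s \<le> x) \<and> (\<forall>t. (\<forall>x\<in>S. t \<le> x) \<longrightarrow> t \<le> s)))"
    using DC unfolding definably_complete_def .
  from this[rule_format, OF A] have "{t. ev f [t]} \<noteq> {} \<and> bdd_below {t. ev f [t]} \<longrightarrow>
     (\<exists>s. (\<forall>x\<in>{t. ev f [t]}. s \<le> x) \<and> (\<forall>t. (\<forall>x\<in>{t. ev f [t]}. t \<le> x) \<longrightarrow> t \<le> s))"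
    unfolding Let_def e by (rule conjunct2)
  thus ?thesis using \<open>{t. ev f [t]} \<noteq> {} \<and> bdd_below {t. ev f [t]}\<close> by blast
qed

end



context lom begin

definition "fF s a b R = FConj (fGtc 0 a) (FConj (fLtc 0 b) (FEx (FConj (fEq 1 s) (Rel R [1, 0]))))"

lemma ev_fF[simp]: "ev (fF s a b R) [t] = (a < t \<and> t < b \<and> [s, t] \<in> R)"
  by (auto simp: fF_def)

lemma ok_fF[simp]: "R \<in> D 2 \<Longrightarrow> ok D 1 (fF s a b R)"
  by (simp add: fF_def numeral_2_eq_2 del: One_nat_def)

lemma L1:
  assumes R: "R \<in> D 2" and ab: "a < b"
    and H1: "\<forall>t. a < t \<and> t < b \<longrightarrow> (\<exists>s. lc c s \<and> [s, t] \<in> R)"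
    and H2: "\<forall>t s s'. a < t \<and> t < b \<longrightarrow> [s, t] \<in> R \<longrightarrow> s \<le> s' \<longrightarrow> lc c s' \<longrightarrow> [s', t] \<in> R"
  shows "\<exists>a' b' s0. a \<le> a' \<and> a' < b' \<and> b' \<le> b \<and> lc c s0 \<and> (\<forall>t. a' < t \<and> t < b' \<longrightarrow> [s0, t] \<in> R)"
proof (rule ccontr)
  assume NI: "\<not> ?thesis"
  define F where "F s = {t. a < t \<and> t < b \<and> [s, t] \<in> R}" for s
  have F_ev: "F s = {t. ev (fF s a b R) [t]}" for s unfolding F_def by simp
  have LFin: "\<exists>b' c' P. finite P \<and> b' < x \<and> x < c' \<and> F s \<inter> {b'<..<c'} \<subseteq> P"
    if s: "lc c s" and x: "a < x" "x < b" for s x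
  proof -
    obtain b' c' P Q where bc: "b' < x" "x < c'" "finite P" "finite Q"
      and dec: "F s \<inter> {b'<..<c'} = P \<union> (\<Union>(u, v)\<in>Q. {u<..<v})"
      using lo_set[OF ok_fF[OF R], of x s a b] unfolding F_ev by blast
    define b'' where "b'' = max b' a"
    define c'' where "c'' = min c' b"
    have "F s \<inter> {b''<..<c''} \<subseteq> P"
    proof
      fix t assume t: "t \<in> F s \<inter> {b''<..<c''}"
      hence "t \<in> F s \<inter> {b'<..<c'}" unfolding b''_def c''_def by auto
      hence "t \<in> P \<union> (\<Union>(u, v)\<in>Q. {u<..<v})" using dec by simp
      moreover have "t \<notin> (\<Union>(u, v)\<in>Q. {u<..<v})"
      proof
        assume "t \<in> (\<Union>(u, v)\<in>Q. {u<..<v})"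
        then obtain u v where uv: "(u, v) \<in> Q" "u < t" "t < v" by auto
        define a1 where "a1 = max u b''"
        define b1 where "b1 = min v c''"
        have "a1 < b1" using uv t unfolding a1_def b1_def by auto
        moreover have "a \<le> a1" unfolding a1_def b''_def by (simp add: le_max_iff_disj)
        moreover have "b1 \<le> b" unfolding b1_def c''_def by (simp add: min_le_iff_disj)
        moreover have "[s, t'] \<in> R" if "a1 < t'" "t' < b1" for t'
        proof -
          have "t' \<in> {u<..<v}" using that unfolding a1_def b1_def by auto
          hence "t' \<in> P \<union> (\<Union>(u, v)\<in>Q. {u<..<v})" using uv(1) by blast
          moreover have "t' \<in> {b'<..<c'}" using that unfolding a1_def b1_def b''_def c''_def by auto
          ultimately have "t' \<in> F s" using dec by blast
          thus ?thesis unfolding F_def by simp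
        qed
        ultimately show False using NI s by blast
      qed
      ultimately show "t \<in> P" by blast
    qed
    moreover have "b'' < x" "x < c''" using bc x unfolding b''_def c''_def by auto
    ultimately show ?thesis using bc(3) by blast
  qed
  obtain p where p: "a < p" "p < b" using ab dense by blast
  define fE where "fE = FConj (fGtc 0 p) (FConj (fLtc 0 b) (FEx (FConj (fLc c 1) (FConj (Rel R [1, 0])
      (FConj (fGtc 0 a) (FAll (FImp (FConj (fGtc 2 p) (fLt 2 0))
         (Neg (FConj (fGtc 2 a) (FConj (fLtc 2 b) (Rel R [1, 2])))))))))))"
  define E where "E = {t. p < t \<and> t < b \<and> (\<exists>s. lc c s \<and> t \<in> F s \<and> (\<forall>t'. p < t' \<and> t' < t \<longrightarrow> t' \<notin> F s))}"
  have okE: "ok D 1 fE" using R unfolding fE_def by (simp add: numeral_2_eq_2 del: One_nat_def)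
  have E_ev: "E = {t. ev fE [t]}" unfolding E_def fE_def F_def by auto
  have Eacc: "\<forall>q>p. \<exists>t. p < t \<and> t < q \<and> t \<in> E"
  proof (intro allI impI)
    fix q assume q: "p < q"
    obtain t' where t': "p < t'" "t' < min q b" using q p dense by (metis min_less_iff_conj)
    obtain s where s: "lc c s" "[s, t'] \<in> R" using H1 t' p by (meson less_trans min_less_iff_conj)
    define fS where "fS = FConj (fGtc 0 p) (FConj (Neg (fGtc 0 t')) (fF s a b R))"
    define SS where "SS = {t. p < t \<and> t \<le> t' \<and> t \<in> F s}"
    have okS: "ok D 1 fS" unfolding fS_def using R by (simp del: One_nat_def)
    have SS_ev: "SS = {t. ev fS [t]}" unfolding SS_def fS_def F_def by (auto simp: not_less)
    have t'S: "t' \<in> SS" unfolding SS_def F_def using t' s p by auto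
    have pS: "\<forall>t\<in>SS. p \<le> t" unfolding SS_def by auto
    obtain m where m1: "\<forall>t\<in>SS. m \<le> t" and m2: "\<forall>m'. (\<forall>t\<in>SS. m' \<le> t) \<longrightarrow> m' \<le> m"
      using dc_glb[OF okS, of t' p] t'S pS unfolding SS_ev by blast
    have mp: "p \<le> m" using m2 pS by blast
    have mt': "m \<le> t'" using m1 t'S by blast
    show "\<exists>t. p < t \<and> t < q \<and> t \<in> E"
    proof (cases "m = p")
      case True
      obtain b' c' P where bc: "finite P" "b' < p" "p < c'" "F s \<inter> {b'<..<c'} \<subseteq> P"
        using LFin[OF s(1) p] by blast
      obtain q2 where q2: "q2 > p" "\<forall>t. p < t \<and> t < q2 \<longrightarrow> t \<notin> F s" using LF[OF bc] by blast
      have "\<forall>t\<in>SS. min q2 t' \<le> t"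
      proof
        fix t assume "t \<in> SS"
        hence "p < t" "t \<in> F s" unfolding SS_def by auto
        hence "q2 \<le> t" using q2(2) not_less by blast
        thus "min q2 t' \<le> t" by (simp add: min_le_iff_disj)
      qed
      hence "min q2 t' \<le> m" using m2 by blast
      thus ?thesis using True q2(1) t'(1) by (auto simp: min_le_iff_disj)
    next
      case False
      hence mp': "p < m" using mp by simp
      have mb: "a < m" "m < b" using mp' mt' t' p by (auto simp: min_less_iff_conj)
      have mF: "m \<in> F s"
      proof (rule ccontr)
        assume nm: "m \<notin> F s"
        obtain b' c' P where bc: "finite P" "b' < m" "m < c'" "F s \<inter> {b'<..<c'} \<subseteq> P"
          using LFin[OF s(1) mb] by blast
        obtain q2 where q2: "q2 > m" "\<forall>t. m < t \<and> t < q2 \<longrightarrow> t \<notin> F s" using LF[OF bc] by blast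
        have "\<forall>t\<in>SS. min q2 t' \<le> t"
        proof
          fix t assume tS: "t \<in> SS"
          hence "m \<le> t" "t \<in> F s" "t \<le> t'" using m1 unfolding SS_def by auto
          hence "m < t" using nm by (metis order_le_less)
          hence "q2 \<le> t" using q2(2) \<open>t \<in> F s\<close> not_less by blast
          thus "min q2 t' \<le> t" by (simp add: min_le_iff_disj)
        qed
        hence "min q2 t' \<le> m" using m2 by blast
        hence "t' \<le> m" using q2(1) by (auto simp: min_le_iff_disj)
        hence "m = t'" using mt' by simp
        thus False using nm t'S unfolding SS_def by simp
      qed
      have "m \<in> E" unfolding E_def
      proof (intro CollectI conjI exI[of _ s])
        show "p < m" "m < b" "lc c s" "m \<in> F s" using mp' mb s mF by auto
        show "\<forall>t'. p < t' \<and> t' < m \<longrightarrow> t' \<notin> F s"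
        proof (intro allI impI)
          fix t'' assume t'': "p < t'' \<and> t'' < m"
          show "t'' \<notin> F s"
          proof
            assume "t'' \<in> F s"
            hence "t'' \<in> SS" unfolding SS_def using t'' mt' by auto
            thus False using m1 t'' by (meson not_le)
          qed
        qed
      qed
      moreover have "m < q" using mt' t' by (meson le_less_trans min_less_iff_conj)
      ultimately show ?thesis using mp' by blast
    qed
  qed
  obtain b' c' P Q where bc: "b' < p" "p < c'" "finite P" "finite Q"
    and dec: "E \<inter> {b'<..<c'} = P \<union> (\<Union>(u, v)\<in>Q. {u<..<v})"
    using lo_set[OF okE, of p] unfolding E_ev by blast
  obtain dl where dl: "dl > p" "\<forall>t. p < t \<and> t < dl \<longrightarrow> t \<in> E"
    using AC_right[OF bc(3,4,1,2) dec Eacc] by blast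
  obtain t1 where t1: "p < t1" "t1 < dl" using dl(1) dense by blast
  have "t1 \<in> E" using dl t1 by blast
  then obtain s1 where s1: "lc c s1" "t1 \<in> F s1" and t1b: "t1 < b" unfolding E_def by blast
  have good: "[s1, t] \<in> R" if t: "t1 < t" "t < min dl b" for t
  proof -
    have "t \<in> E" using dl t t1 by (simp add: min_less_iff_conj)
    then obtain st where st: "lc c st" "t \<in> F st" "\<forall>t'. p < t' \<and> t' < t \<longrightarrow> t' \<notin> F st"
      unfolding E_def by blast
    have nt1: "t1 \<notin> F st" using st(3) t1 t by blast
    show ?thesis
    proof (cases "st \<le> s1")
      case True
      thus ?thesis using H2 st(2) s1(1) unfolding F_def by blast
    next
      case False
      hence "s1 \<le> st" by simp
      hence "[st, t1] \<in> R" using H2 s1(2) st(1) unfolding F_def by blast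
      thus ?thesis using nt1 s1(2) unfolding F_def by blast
    qed
  qed
  have "a \<le> t1" "t1 < min dl b" "min dl b \<le> b" using t1 p t1b by auto
  thus False using NI s1(1) good by blast
qed

end



definition box :: "'a::linorder list \<Rightarrow> 'a list \<Rightarrow> 'a list set" where
  "box a b = {y. length y = length a \<and> (\<forall>k<length a. a ! k < y ! k \<and> y ! k < b ! k)}"

definition sub :: "'a::linorder list \<Rightarrow> 'a list \<Rightarrow> 'a list \<Rightarrow> 'a list \<Rightarrow> bool" where
  "sub a b a' b' \<longleftrightarrow> length a' = length a \<and> length b' = length a \<and>
     (\<forall>k<length a. a ! k \<le> a' ! k \<and> a' ! k < b' ! k \<and> b' ! k \<le> b ! k)"

lemma sub_box: "sub a b a' b' \<Longrightarrow> box a' b' \<subseteq> box a b"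
  unfolding sub_def box_def by (auto intro: le_less_trans less_le_trans)

lemma sub_trans: "sub a b a' b' \<Longrightarrow> sub a' b' a'' b'' \<Longrightarrow> sub a b a'' b''"
  unfolding sub_def by (metis order_trans)

lemma box_Cons: "t # y \<in> box (a0 # as) (b0 # bs) \<longleftrightarrow> a0 < t \<and> t < b0 \<and> y \<in> box as bs"
  unfolding box_def by (simp add: All_less_Suc2) blast

definition yidx :: "nat \<Rightarrow> nat list" where "yidx d = [Suc 0..<Suc d]"

lemma yidx_len[simp]: "length (yidx d) = d" by (simp add: yidx_def)
lemma yidx_set[simp]: "set (yidx d) = {Suc 0..<Suc d}" by (simp add: yidx_def del: upt_Suc)

lemma map_yidx[simp]: "length y = d \<Longrightarrow> map (nth (s # y @ zs)) (yidx d) = y"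
  by (rule nth_equalityI) (auto simp: yidx_def nth_append simp del: upt_Suc)

lemma map_yidx0[simp]: "length y = d \<Longrightarrow> map (nth (s # y)) (yidx d) = y"
  using map_yidx[of y d s "[]"] by simp

lemma Suc_set: "{xs. length xs = Suc d \<and> P xs} = {s # y |s y. length y = d \<and> P (s # y)}"
  by (auto simp: length_Suc_conv)

context lom begin

lemma D_param:
  assumes A: "A \<in> D (m + k)" and L: "length ps = k"
  shows "{u. length u = m \<and> u @ ps \<in> A} \<in> D m"
proof -
  define T where "T = A \<inter> {x. length x = m + k \<and> (\<forall>j<k. x \<in> {x. length x = m + k \<and> map (nth x) [m + j] \<in> {[ps ! j]}})}"
  have "T \<in> D (m + k)" unfolding T_def
    apply (rule D_int[OF S A])
    apply (rule D_INT[OF S])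
    apply (rule D_sub[OF S PT_D])
    by auto
  hence "take m ` T \<in> D m" by (rule D_take[OF S])
  moreover have "take m ` T = {u. length u = m \<and> u @ ps \<in> A}"
  proof (intro equalityI subsetI)
    fix u assume "u \<in> take m ` T"
    then obtain x where x: "x \<in> T" "u = take m x" by blast
    have lx: "length x = m + k" "x \<in> A" using x(1) unfolding T_def by auto
    have dg: "\<forall>j<k. x ! (m + j) = ps ! j" using x(1) unfolding T_def by auto
    have "drop m x = ps"
      by (rule nth_equalityI) (use lx L dg in auto)
    hence "x = u @ ps" using x(2) by (metis append_take_drop_id)
    thus "u \<in> {u. length u = m \<and> u @ ps \<in> A}" using lx x(2) by auto
  next
    fix u assume u: "u \<in> {u. length u = m \<and> u @ ps \<in> A}"
    have "u @ ps \<in> T" unfolding T_def using u L by (auto simp: nth_append)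
    thus "u \<in> take m ` T" using u by (metis (mono_tags, lifting) append_eq_conv_conj image_eqI mem_Collect_eq)
  qed
  ultimately show ?thesis by simp
qed

end



definition "fR2 d p Gs = FConj (fLtc 0 p) (FAll (FImp (FConj (fLt 0 (Suc d)) (fLtc (Suc d) p)) (Rel Gs (Suc d # yidx d))))"
definition "fR3 d c t1 R = FConj (fLtc 0 t1) (FEx (FConj (fLc c (Suc d)) (FAll (FImp (FConj (fLt 0 (Suc (Suc d))) (fLtc (Suc (Suc d)) t1)) (Rel R (Suc d # Suc (Suc d) # yidx d))))))"
definition "fR4 d c v t1 R = FConj (fLc c 0) (FAll (FImp (FConj (fGtc (Suc d) v) (fLtc (Suc d) t1)) (Rel R (0 # Suc d # yidx d))))"
definition "fG d c a0 b0 R = FConj (fGtc 0 a0) (FConj (fLtc 0 b0) (FEx (FEx (FEx (FConj (Neg (fLtc (Suc d) a0))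
   (FConj (fLt (Suc d) 0) (FConj (fLt 0 (Suc (Suc d))) (FConj (Neg (fGtc (Suc (Suc d)) b0))
   (FConj (fLc c (Suc (Suc (Suc d)))) (FAll (FImp (FConj (fLt (Suc d) (Suc (Suc (Suc (Suc d))))) (fLt (Suc (Suc (Suc (Suc d)))) (Suc (Suc d))))
      (Rel R (Suc (Suc (Suc d)) # Suc (Suc (Suc (Suc d))) # yidx d)))))))))))))"

lemma ev_fR2: "length y = d \<Longrightarrow> ev (fR2 d p Gs) (s # y) = (s < p \<and> (\<forall>t. s < t \<and> t < p \<longrightarrow> t # y \<in> Gs))"
  by (simp add: fR2_def nth_append)

lemma ev_fR3: "length y = d \<Longrightarrow> ev (fR3 d c t1 R) (s # y) = (s < t1 \<and> (\<exists>w. lc c w \<and> (\<forall>t. s < t \<and> t < t1 \<longrightarrow> w # t # y \<in> R)))"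
  by (simp add: fR3_def nth_append)

lemma ev_fR4: "length y = d \<Longrightarrow> ev (fR4 d c v t1 R) (w # y) = (lc c w \<and> (\<forall>t. v < t \<and> t < t1 \<longrightarrow> w # t # y \<in> R))"
  by (simp add: fR4_def nth_append)

lemma ev_fG: "length y = d \<Longrightarrow> ev (fG d c a0 b0 R) (t # y) = (a0 < t \<and> t < b0 \<and>
   (\<exists>a' b' s0. a0 \<le> a' \<and> a' < t \<and> t < b' \<and> b' \<le> b0 \<and> lc c s0 \<and> (\<forall>t'. a' < t' \<and> t' < b' \<longrightarrow> s0 # t' # y \<in> R)))"
  by (simp add: fG_def nth_append not_less)

context lom begin

lemma def_Suc: "ok D (Suc d) f \<Longrightarrow> (\<And>s y. length y = d \<Longrightarrow> ev f (s # y) = P s y) \<Longrightarrow>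
   {s # y |s y. length y = d \<and> P s y} \<in> D (Suc d)"
proof -
  assume ok: "ok D (Suc d) f" and e: "\<And>s y. length y = d \<Longrightarrow> ev f (s # y) = P s y"
  have "{xs. length xs = Suc d \<and> ev f xs} = {s # y |s y. length y = d \<and> P s y}"
    unfolding Suc_set using e by auto
  thus ?thesis using defs[OF ok] by simp
qed

lemma ok_fR2: "Gs \<in> D (Suc d) \<Longrightarrow> ok D (Suc d) (fR2 d p Gs)" by (auto simp: fR2_def)
lemma ok_fR3: "R \<in> D (Suc (Suc d)) \<Longrightarrow> ok D (Suc d) (fR3 d c t1 R)" by (auto simp: fR3_def)
lemma ok_fR4: "R \<in> D (Suc (Suc d)) \<Longrightarrow> ok D (Suc d) (fR4 d c v t1 R)" by (auto simp: fR4_def)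
lemma ok_fG: "R \<in> D (Suc (Suc d)) \<Longrightarrow> ok D (Suc d) (fG d c a0 b0 R)" by (auto simp: fG_def)

end



context lom begin

definition BA :: "nat \<Rightarrow> bool" where
  "BA d \<longleftrightarrow> (\<forall>R c a b. R \<in> D (Suc d) \<longrightarrow> length a = d \<longrightarrow> length b = d \<longrightarrow> (\<forall>k<d. a ! k < b ! k) \<longrightarrow>
     (\<forall>y\<in>box a b. \<exists>s. lc c s \<and> s # y \<in> R) \<longrightarrow>
     (\<forall>y\<in>box a b. \<forall>s s'. s # y \<in> R \<longrightarrow> s \<le> s' \<longrightarrow> lc c s' \<longrightarrow> s' # y \<in> R) \<longrightarrow>
     (\<exists>a' b' s0. sub a b a' b' \<and> lc c s0 \<and> (\<forall>y\<in>box a' b'. s0 # y \<in> R)))"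

lemma BA_use:
  assumes "BA d" "R \<in> D (Suc d)" "length a = d" "length b = d" "\<forall>k<d. a ! k < b ! k"
    "\<forall>y\<in>box a b. \<exists>s. lc c s \<and> s # y \<in> R"
    "\<forall>y\<in>box a b. \<forall>s s'. s # y \<in> R \<longrightarrow> s \<le> s' \<longrightarrow> lc c s' \<longrightarrow> s' # y \<in> R"
  shows "\<exists>a' b' s0. sub a b a' b' \<and> lc c s0 \<and> (\<forall>y\<in>box a' b'. s0 # y \<in> R)"
  using assms unfolding BA_def by blast

lemma step:
  assumes IH: "BA d" and R: "R \<in> D (Suc (Suc d))" and las: "length as = d" and lbs: "length bs = d"
    and ab0: "a0 < b0" and ab: "\<forall>k<d. as ! k < bs ! k"
    and H1: "\<forall>t y. a0 < t \<and> t < b0 \<longrightarrow> y \<in> box as bs \<longrightarrow> (\<exists>s. lc c s \<and> s # t # y \<in> R)"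
    and H2: "\<forall>t y s s'. a0 < t \<and> t < b0 \<longrightarrow> y \<in> box as bs \<longrightarrow> s # t # y \<in> R \<longrightarrow> s \<le> s' \<longrightarrow> lc c s' \<longrightarrow> s' # t # y \<in> R"
  shows "\<exists>a1 b1 as' bs' s0. a0 \<le> a1 \<and> a1 < b1 \<and> b1 \<le> b0 \<and> sub as bs as' bs' \<and> lc c s0 \<and>
      (\<forall>t y. a1 < t \<and> t < b1 \<longrightarrow> y \<in> box as' bs' \<longrightarrow> s0 # t # y \<in> R)"
proof -
  have lenbox: "length y = d" if "y \<in> box as bs" for y using that las unfolding box_def by simp
  obtain p where p: "a0 < p" "p < b0" using ab0 dense by blast
  define Gs where "Gs = {t # y |t y. length y = d \<and> (a0 < t \<and> t < b0 \<and>
   (\<exists>a' b' s0. a0 \<le> a' \<and> a' < t \<and> t < b' \<and> b' \<le> b0 \<and> lc c s0 \<and> (\<forall>t'. a' < t' \<and> t' < b' \<longrightarrow> s0 # t' # y \<in> R)))}"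
  have GD: "Gs \<in> D (Suc d)" unfolding Gs_def by (rule def_Suc[OF ok_fG[OF R] ev_fG])
  have Gmem: "t # y \<in> Gs \<longleftrightarrow> length y = d \<and> a0 < t \<and> t < b0 \<and>
   (\<exists>a' b' s0. a0 \<le> a' \<and> a' < t \<and> t < b' \<and> b' \<le> b0 \<and> lc c s0 \<and> (\<forall>t'. a' < t' \<and> t' < b' \<longrightarrow> s0 # t' # y \<in> R))"
    for t y unfolding Gs_def by blast
  have acc: "\<exists>q<p. \<forall>t. q < t \<and> t < p \<longrightarrow> t # y \<in> Gs" if y: "y \<in> box as bs" for y
  proof -
    have ly: "length y = d" using lenbox y .
    define Ry where "Ry = {u. length u = 2 \<and> u @ y \<in> R}"
    have RyD: "Ry \<in> D 2" unfolding Ry_def by (rule D_param) (use R ly in auto)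
    have Rymem: "[s, t] \<in> Ry \<longleftrightarrow> s # t # y \<in> R" for s t unfolding Ry_def by simp
    have accG: "\<forall>q<p. \<exists>t. q < t \<and> t < p \<and> t # y \<in> Gs"
    proof (intro allI impI)
      fix q assume qp: "q < p"
      define q' where "q' = max q a0"
      have q'p: "q' < p" using qp p unfolding q'_def by simp
      have "\<exists>a' b' s0. q' \<le> a' \<and> a' < b' \<and> b' \<le> p \<and> lc c s0 \<and> (\<forall>t. a' < t \<and> t < b' \<longrightarrow> [s0, t] \<in> Ry)"
      proof (rule L1[OF RyD q'p])
        show "\<forall>t. q' < t \<and> t < p \<longrightarrow> (\<exists>s. lc c s \<and> [s, t] \<in> Ry)"
          using H1 y p unfolding Rymem q'_def by (meson le_less_trans less_trans max.cobounded2)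
        show "\<forall>t s s'. q' < t \<and> t < p \<longrightarrow> [s, t] \<in> Ry \<longrightarrow> s \<le> s' \<longrightarrow> lc c s' \<longrightarrow> [s', t] \<in> Ry"
          using H2 y p unfolding Rymem q'_def by (meson le_less_trans less_trans max.cobounded2)
      qed
      then obtain a' b' s0 where w: "q' \<le> a'" "a' < b'" "b' \<le> p" "lc c s0" "\<forall>t. a' < t \<and> t < b' \<longrightarrow> s0 # t # y \<in> R"
        unfolding Rymem by blast
      obtain t where t: "a' < t" "t < b'" using w(2) dense by blast
      have "t # y \<in> Gs" unfolding Gmem
        using ly w t p unfolding q'_def by (meson le_less_trans less_le_trans max.cobounded2 order.strict_implies_order order_trans)
      moreover have "q < t" "t < p" using w t unfolding q'_def by auto
      ultimately show "\<exists>t. q < t \<and> t < p \<and> t # y \<in> Gs" by blast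
    qed
    define Gy where "Gy = {u. length u = 1 \<and> u @ y \<in> Gs}"
    have GyD: "Gy \<in> D 1" unfolding Gy_def by (rule D_param) (use GD ly in auto)
    have okGy: "ok D 1 (Rel Gy [0])" using GyD by simp
    have evGy: "ev (Rel Gy [0]) [t] \<longleftrightarrow> t # y \<in> Gs" for t unfolding Gy_def by simp
    obtain b' c' P Q where bc: "b' < p" "p < c'" "finite P" "finite Q"
      and dec: "{t. t # y \<in> Gs} \<inter> {b'<..<c'} = P \<union> (\<Union>(u, v)\<in>Q. {u<..<v})"
      using lo_set[OF okGy, of p] unfolding evGy by blast
    show ?thesis using AC_left[OF bc(3,4,1,2) dec] accG by simp
  qed
  define R2 where "R2 = {s # y |s y. length y = d \<and> (s < p \<and> (\<forall>t. s < t \<and> t < p \<longrightarrow> t # y \<in> Gs))}"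
  have R2D: "R2 \<in> D (Suc d)" unfolding R2_def by (rule def_Suc[OF ok_fR2[OF GD] ev_fR2])
  have R2mem: "s # y \<in> R2 \<longleftrightarrow> length y = d \<and> s < p \<and> (\<forall>t. s < t \<and> t < p \<longrightarrow> t # y \<in> Gs)" for s y
    unfolding R2_def by blast
  obtain as1 bs1 w0 where s1: "sub as bs as1 bs1" and w0: "lc (Some p) w0"
      and w0R: "\<forall>y\<in>box as1 bs1. w0 # y \<in> R2"
  proof -
    have "\<exists>a' b' s0. sub as bs a' b' \<and> lc (Some p) s0 \<and> (\<forall>y\<in>box a' b'. s0 # y \<in> R2)"
    proof (rule BA_use[OF IH R2D las lbs ab])
      show "\<forall>y\<in>box as bs. \<exists>s. lc (Some p) s \<and> s # y \<in> R2"
        using acc lenbox unfolding R2mem lc_def by fastforce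
      show "\<forall>y\<in>box as bs. \<forall>s s'. s # y \<in> R2 \<longrightarrow> s \<le> s' \<longrightarrow> lc (Some p) s' \<longrightarrow> s' # y \<in> R2"
        unfolding R2mem lc_def by (auto intro: le_less_trans)
    qed
    thus ?thesis using that by blast
  qed
  have w0p: "w0 < p" using w0 unfolding lc_def by simp
  have box1: "box as1 bs1 \<subseteq> box as bs" using sub_box[OF s1] .
  have G1: "\<forall>y\<in>box as1 bs1. \<forall>t. w0 < t \<and> t < p \<longrightarrow> t # y \<in> Gs" using w0R unfolding R2mem by blast
  obtain t1 where t1: "max w0 a0 < t1" "t1 < p" using w0p p dense by (metis max_less_iff_conj)
  define R3 where "R3 = {s # y |s y. length y = d \<and> (s < t1 \<and> (\<exists>w. lc c w \<and> (\<forall>t. s < t \<and> t < t1 \<longrightarrow> w # t # y \<in> R)))}"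
  have R3D: "R3 \<in> D (Suc d)" unfolding R3_def by (rule def_Suc[OF ok_fR3[OF R] ev_fR3])
  have R3mem: "s # y \<in> R3 \<longleftrightarrow> length y = d \<and> s < t1 \<and> (\<exists>w. lc c w \<and> (\<forall>t. s < t \<and> t < t1 \<longrightarrow> w # t # y \<in> R))" for s y
    unfolding R3_def by blast
  have las1: "length as1 = d" "length bs1 = d" using s1 las unfolding sub_def by auto
  have ab1: "\<forall>k<d. as1 ! k < bs1 ! k" using s1 las unfolding sub_def by auto
  obtain as2 bs2 v0 where s2: "sub as1 bs1 as2 bs2" and v0: "lc (Some t1) v0"
      and v0R: "\<forall>y\<in>box as2 bs2. v0 # y \<in> R3"
  proof -
    have "\<exists>a' b' s0. sub as1 bs1 a' b' \<and> lc (Some t1) s0 \<and> (\<forall>y\<in>box a' b'. s0 # y \<in> R3)"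
    proof (rule BA_use[OF IH R3D las1 ab1])
      show "\<forall>y\<in>box as1 bs1. \<exists>s. lc (Some t1) s \<and> s # y \<in> R3"
      proof
        fix y assume y: "y \<in> box as1 bs1"
        have "t1 # y \<in> Gs" using G1 y t1 by auto
        then obtain a' b' s0 where g: "a' < t1" "t1 < b'" "lc c s0" "\<forall>t'. a' < t' \<and> t' < b' \<longrightarrow> s0 # t' # y \<in> R"
          and ly: "length y = d" unfolding Gmem by blast
        have "a' # y \<in> R3" unfolding R3mem using g ly by (meson less_trans)
        thus "\<exists>s. lc (Some t1) s \<and> s # y \<in> R3" using g(1) unfolding lc_def by auto
      qed
      show "\<forall>y\<in>box as1 bs1. \<forall>s s'. s # y \<in> R3 \<longrightarrow> s \<le> s' \<longrightarrow> lc (Some t1) s' \<longrightarrow> s' # y \<in> R3"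
      proof (intro ballI allI impI)
        fix y s s' assume A: "s # y \<in> R3" "s \<le> s'" "lc (Some t1) s'"
        then obtain w where w: "lc c w" "\<forall>t. s < t \<and> t < t1 \<longrightarrow> w # t # y \<in> R" "length y = d"
          unfolding R3mem by blast
        have "\<forall>t. s' < t \<and> t < t1 \<longrightarrow> w # t # y \<in> R" using w(2) A(2) by (meson le_less_trans)
        moreover have "s' < t1" using A(3) unfolding lc_def by simp
        ultimately show "s' # y \<in> R3" unfolding R3mem using w by blast
      qed
    qed
    thus ?thesis using that by blast
  qed
  have v0t1: "v0 < t1" using v0 unfolding lc_def by simp
  have box2: "box as2 bs2 \<subseteq> box as1 bs1" using sub_box[OF s2] .
  define v1 where "v1 = max v0 (max w0 a0)"
  have v1t1: "v1 < t1" using v0t1 t1 unfolding v1_def by simp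
  have a0v1: "a0 \<le> v1" unfolding v1_def by (simp add: le_max_iff_disj)
  define R4 where "R4 = {w # y |w y. length y = d \<and> (lc c w \<and> (\<forall>t. v1 < t \<and> t < t1 \<longrightarrow> w # t # y \<in> R))}"
  have R4D: "R4 \<in> D (Suc d)" unfolding R4_def by (rule def_Suc[OF ok_fR4[OF R] ev_fR4])
  have R4mem: "w # y \<in> R4 \<longleftrightarrow> length y = d \<and> lc c w \<and> (\<forall>t. v1 < t \<and> t < t1 \<longrightarrow> w # t # y \<in> R)" for w y
    unfolding R4_def by blast
  have las2: "length as2 = d" "length bs2 = d" using s2 las1 unfolding sub_def by auto
  have ab2: "\<forall>k<d. as2 ! k < bs2 ! k" using s2 las1 unfolding sub_def by auto
  obtain as3 bs3 w1 where s3: "sub as2 bs2 as3 bs3" and w1: "lc c w1"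
      and w1R: "\<forall>y\<in>box as3 bs3. w1 # y \<in> R4"
  proof -
    have "\<exists>a' b' s0. sub as2 bs2 a' b' \<and> lc c s0 \<and> (\<forall>y\<in>box a' b'. s0 # y \<in> R4)"
    proof (rule BA_use[OF IH R4D las2 ab2])
      show "\<forall>y\<in>box as2 bs2. \<exists>s. lc c s \<and> s # y \<in> R4"
      proof
        fix y assume y: "y \<in> box as2 bs2"
        obtain w where w: "lc c w" "\<forall>t. v0 < t \<and> t < t1 \<longrightarrow> w # t # y \<in> R" and ly: "length y = d"
          using v0R y unfolding R3mem by blast
        have "w # y \<in> R4" unfolding R4mem using w ly unfolding v1_def by auto
        thus "\<exists>s. lc c s \<and> s # y \<in> R4" using w(1) by blast
      qed
      show "\<forall>y\<in>box as2 bs2. \<forall>s s'. s # y \<in> R4 \<longrightarrow> s \<le> s' \<longrightarrow> lc c s' \<longrightarrow> s' # y \<in> R4"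
      proof (intro ballI allI impI)
        fix y s s' assume y: "y \<in> box as2 bs2" and sR: "s # y \<in> R4" and ss: "s \<le> s'" and ls: "lc c s'"
        have yb: "y \<in> box as bs" using y box1 box2 by blast
        show "s' # y \<in> R4" unfolding R4mem
        proof (intro conjI allI impI)
          show "length y = d" "lc c s'" using sR ls unfolding R4mem by auto
          fix t assume t: "v1 < t \<and> t < t1"
          have "a0 < t" "t < b0" using t a0v1 t1 p by (auto intro: le_less_trans less_trans)
          moreover have "s # t # y \<in> R" using sR t unfolding R4mem by blast
          ultimately show "s' # t # y \<in> R" using H2 yb ss ls by blast
        qed
      qed
    qed
    thus ?thesis using that by blast
  qed
  have "sub as bs as3 bs3" using sub_trans[OF sub_trans[OF s1 s2] s3] .
  moreover have "t1 \<le> b0" using t1 p by simp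
  moreover have "\<forall>t y. v1 < t \<and> t < t1 \<longrightarrow> y \<in> box as3 bs3 \<longrightarrow> w1 # t # y \<in> R"
    using w1R unfolding R4mem by blast
  ultimately show ?thesis using a0v1 v1t1 w1 by blast
qed

end



lemma box_Cons_ex: "x \<in> box (a0 # as) (b0 # bs) \<Longrightarrow> \<exists>t y. x = t # y"
  unfolding box_def by (cases x) auto

lemma sub_Cons: "sub (a0 # as) (b0 # bs) (a1 # as') (b1 # bs') \<longleftrightarrow> a0 \<le> a1 \<and> a1 < b1 \<and> b1 \<le> b0 \<and> sub as bs as' bs'"
  unfolding sub_def by (simp add: All_less_Suc2) (metis length_Cons)

context lom begin

lemma BA_all: "BA d"
proof (induction d)
  case 0
  show ?case unfolding BA_def
  proof (intro allI impI)
    fix R c and a b :: "'a list"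
    assume "length a = 0" "length b = 0" and H1: "\<forall>y\<in>box a b. \<exists>s. lc c s \<and> s # y \<in> R"
    hence ab: "a = []" "b = []" by auto
    have bx: "box a b = {[]}" unfolding ab box_def by auto
    obtain s where s: "lc c s" "s # [] \<in> R" using H1 bx by auto
    have "sub a b [] []" unfolding ab sub_def by simp
    moreover have "\<forall>y\<in>box [] []. s # y \<in> R" using bx s(2) unfolding ab by simp
    ultimately show "\<exists>a' b' s0. sub a b a' b' \<and> lc c s0 \<and> (\<forall>y\<in>box a' b'. s0 # y \<in> R)"
      using s(1) by blast
  qed
next
  case (Suc d)
  show ?case unfolding BA_def
  proof (intro allI impI)
    fix R c and a b :: "'a list"
    assume R: "R \<in> D (Suc (Suc d))" and la: "length a = Suc d" and lb: "length b = Suc d"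
      and ab: "\<forall>k<Suc d. a ! k < b ! k"
      and H1: "\<forall>y\<in>box a b. \<exists>s. lc c s \<and> s # y \<in> R"
      and H2: "\<forall>y\<in>box a b. \<forall>s s'. s # y \<in> R \<longrightarrow> s \<le> s' \<longrightarrow> lc c s' \<longrightarrow> s' # y \<in> R"
    obtain a0 as where a: "a = a0 # as" "length as = d" using la by (auto simp: length_Suc_conv)
    obtain b0 bs where b: "b = b0 # bs" "length bs = d" using lb by (auto simp: length_Suc_conv)
    have ab0: "a0 < b0" using ab a b by auto
    have ab': "\<forall>k<d. as ! k < bs ! k" using ab a b by auto
    have H1': "\<forall>t y. a0 < t \<and> t < b0 \<longrightarrow> y \<in> box as bs \<longrightarrow> (\<exists>s. lc c s \<and> s # t # y \<in> R)"
    proof (intro allI impI)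
      fix t y assume "a0 < t \<and> t < b0" "y \<in> box as bs"
      hence "t # y \<in> box a b" unfolding a b box_Cons by simp
      thus "\<exists>s. lc c s \<and> s # t # y \<in> R" using H1 by blast
    qed
    have H2': "\<forall>t y s s'. a0 < t \<and> t < b0 \<longrightarrow> y \<in> box as bs \<longrightarrow> s # t # y \<in> R \<longrightarrow> s \<le> s' \<longrightarrow> lc c s' \<longrightarrow> s' # t # y \<in> R"
    proof (intro allI impI)
      fix t y s s' assume "a0 < t \<and> t < b0" "y \<in> box as bs" "s # t # y \<in> R" "s \<le> s'" "lc c s'"
      moreover hence "t # y \<in> box a b" unfolding a b box_Cons by simp
      ultimately show "s' # t # y \<in> R" using H2 by blast
    qed
    obtain a1 b1 as' bs' s0 where st: "a0 \<le> a1" "a1 < b1" "b1 \<le> b0" "sub as bs as' bs'" "lc c s0"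
      "\<forall>t y. a1 < t \<and> t < b1 \<longrightarrow> y \<in> box as' bs' \<longrightarrow> s0 # t # y \<in> R"
      using step[OF Suc.IH R a(2) b(2) ab0 ab' H1' H2'] by blast
    have "sub a b (a1 # as') (b1 # bs')" unfolding a b sub_Cons using st by blast
    moreover have "\<forall>y\<in>box (a1 # as') (b1 # bs'). s0 # y \<in> R"
    proof
      fix x assume x: "x \<in> box (a1 # as') (b1 # bs')"
      then obtain t y where xt: "x = t # y" using box_Cons_ex by blast
      hence "a1 < t \<and> t < b1" "y \<in> box as' bs'" using x unfolding xt box_Cons by auto
      thus "s0 # x \<in> R" using st(6) xt by blast
    qed
    ultimately show "\<exists>a' b' s0. sub a b a' b' \<and> lc c s0 \<and> (\<forall>y\<in>box a' b'. s0 # y \<in> R)"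
      using st(5) by blast
  qed
qed

end



definition FExN :: "nat \<Rightarrow> 'a fm \<Rightarrow> 'a fm" where "FExN k f = (FEx ^^ k) f"

lemma ev_FExN: "ev (FExN k f) xs = (\<exists>u. length u = k \<and> ev f (xs @ u))"
proof (induction k arbitrary: xs)
  case 0 thus ?case by (simp add: FExN_def)
next
  case (Suc k)
  have "ev (FExN (Suc k) f) xs = (\<exists>v. ev (FExN k f) (xs @ [v]))" by (simp add: FExN_def)
  also have "\<dots> = (\<exists>v u. length u = k \<and> ev f (xs @ [v] @ u))" using Suc by simp
  also have "\<dots> = (\<exists>u. length u = Suc k \<and> ev f (xs @ u))"
    by (auto simp: length_Suc_conv) 
  finally show ?case .
qed

lemma ok_FExN: "ok D n (FExN k f) = ok D (n + k) f"
  by (induction k arbitrary: n) (auto simp: FExN_def)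

primrec FConjs :: "'a fm list \<Rightarrow> 'a fm" where
  "FConjs [] = Neg (Rel {} [])"
| "FConjs (f # fs) = FConj f (FConjs fs)"

lemma ev_FConjs[simp]: "ev (FConjs fs) xs = (\<forall>f\<in>set fs. ev f xs)"
  by (induction fs) auto

definition "DG = {x. length x = 2 \<and> x ! 0 = x ! 1}"
definition "fEqv i j = Rel DG [i, j]"

lemma ev_fEqv[simp]: "ev (fEqv i j) xs = (xs ! i = xs ! j)"
  by (simp add: fEqv_def DG_def)

definition DS :: "nat \<Rightarrow> 'a::linorder list set \<Rightarrow> nat set" where
  "DS n X = {d. \<exists>is\<in>proj_indices n d. has_interior d (coord_proj is ` X)}"

lemma dim_DS: "dim n X = (if X = {} then -\<infinity> else ereal (of_nat (Max (DS n X))))"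
  unfolding dim_def DS_def by simp

lemma DS_bound: "d \<in> DS n X \<Longrightarrow> d \<le> n"
proof -
  assume "d \<in> DS n X"
  then obtain "is" where i: "length is = d" "sorted_wrt (<) is" "\<forall>i\<in>set is. i < n"
    unfolding DS_def proj_indices_def by blast
  have "distinct is" using i(2) strict_sorted_iff by blast
  hence "card (set is) = d" using i(1) distinct_card by blast
  moreover have "set is \<subseteq> {..<n}" using i(3) by auto
  ultimately show "d \<le> n" by (metis card_lessThan card_mono finite_lessThan)
qed

lemma DS_finite: "finite (DS n X)"
  using DS_bound by (meson finite_atMost finite_subset subsetI atMost_iff)

lemma DS_zero: "X \<noteq> {} \<Longrightarrow> 0 \<in> DS n X"
proof -
  assume "X \<noteq> {}"
  have "[] \<in> proj_indices n 0" unfolding proj_indices_def by simp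
  moreover have "has_interior 0 (coord_proj [] ` X)" unfolding has_interior_def coord_proj_def
    using \<open>X \<noteq> {}\<close> by auto
  ultimately show ?thesis unfolding DS_def by blast
qed

lemma DS_mono: "X \<subseteq> Y \<Longrightarrow> DS n X \<subseteq> DS n Y"
  unfolding DS_def has_interior_def by (smt (verit) Collect_mono_iff image_mono order_trans)

lemma dim_mono: "X \<subseteq> Y \<Longrightarrow> dim n X \<le> dim n Y"
proof -
  assume XY: "X \<subseteq> Y"
  show ?thesis
  proof (cases "X = {}")
    case True thus ?thesis by (simp add: dim_DS)
  next
    case False
    hence "Y \<noteq> {}" using XY by blast
    have "Max (DS n X) \<le> Max (DS n Y)"
      by (rule Max_mono[OF DS_mono[OF XY]]) (use DS_zero[OF False] DS_finite in auto)
    thus ?thesis using False \<open>Y \<noteq> {}\<close> by (simp add: dim_DS)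
  qed
qed

lemma box_nonempty:
  fixes a b :: "'a::dense_linorder list"
  assumes "length b = length a" "\<forall>k<length a. a ! k < b ! k"
  shows "\<exists>y. y \<in> box a b"
proof -
  define y where "y = map (\<lambda>k. SOME t. a ! k < t \<and> t < b ! k) [0..<length a]"
  have yk: "a ! k < y ! k \<and> y ! k < b ! k" if "k < length a" for k
  proof -
    have e: "\<exists>t. a ! k < t \<and> t < b ! k" using assms(2) that dense by blast
    have "a ! k < (SOME t. a ! k < t \<and> t < b ! k) \<and> (SOME t. a ! k < t \<and> t < b ! k) < b ! k"
      by (rule someI_ex[OF e])
    thus ?thesis unfolding y_def using that by simp
  qed
  have "length y = length a" unfolding y_def by simp
  hence "y \<in> box a b" unfolding box_def using yk by simp
  thus ?thesis by blast
qed

definition "xidx d n = map (\<lambda>i. Suc d + i) [0..<n]"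

lemma map_xidx: "length y = d \<Longrightarrow> length x = n \<Longrightarrow> map (nth (r # y @ x)) (0 # xidx d n) = r # x"
  by (auto simp: nth_append xidx_def intro!: nth_equalityI)

lemma set_xidx: "i \<in> set (xidx d n) \<Longrightarrow> i < Suc d + n"
  by (auto simp: xidx_def)

lemma len_xidx: "length (xidx d n) = n" by (simp add: xidx_def)

definition "fIn d n XX is = FConj (Rel XX (0 # xidx d n)) (FConjs (map (\<lambda>k. fEqv (Suc k) (Suc d + is ! k)) [0..<d]))"

definition "fRm d n z XX is = FConj (fGtc 0 z) (FExN n (fIn d n XX is))"

lemma eqs_lemma:
  assumes "length y = d" "length is = d"
  shows "(\<forall>k\<in>{0..<d}. (r # y @ x) ! Suc k = (r # y @ x) ! (Suc d + is ! k)) = (y = map (nth x) is)"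
proof -
  have "(\<forall>k\<in>{0..<d}. (r # y @ x) ! Suc k = (r # y @ x) ! (Suc d + is ! k)) = (\<forall>k<d. y ! k = x ! (is ! k))"
    using assms(1) by (auto simp: nth_append)
  also have "\<dots> = (y = map (nth x) is)" using assms by (auto simp: list_eq_iff_nth_eq)
  finally show ?thesis .
qed

lemma ev_fIn: "length y = d \<Longrightarrow> length x = n \<Longrightarrow> length is = d \<Longrightarrow>
   ev (fIn d n XX is) (r # y @ x) = (r # x \<in> XX \<and> y = map (nth x) is)"
  unfolding fIn_def
  apply (simp only: ev_derived ev.simps map_xidx ev_FConjs set_map ball_simps ev_fEqv)
  using eqs_lemma[of y d "is" r x] by (simp add: Ball_def image_iff)

lemma ev_fRm:
  assumes ly: "length y = d" and li: "length is = d"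
  shows "ev (fRm d n z XX is) (r # y) = (z < r \<and> (\<exists>x. length x = n \<and> r # x \<in> XX \<and> y = map (nth x) is))"
proof -
  have "ev (fRm d n z XX is) (r # y) = (z < r \<and> (\<exists>x. length x = n \<and> ev (fIn d n XX is) (r # y @ x)))"
    unfolding fRm_def by (simp add: ev_FExN)
  also have "\<dots> = (z < r \<and> (\<exists>x. length x = n \<and> r # x \<in> XX \<and> y = map (nth x) is))"
    using ev_fIn[OF ly _ li] by blast
  finally show ?thesis .
qed

context lom begin

lemma empty_D0: "{} \<in> D 0"
proof -
  have "{x. length x = (0::nat)} - {x. length x = 0} \<in> D 0" by (rule D_compl[OF S D_univ[OF S]])
  thus ?thesis by simp
qed

lemma DG_D: "DG \<in> D 2"
  unfolding DG_def by (rule D_diag[OF S]) auto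

lemma ok_FConjs: "ok D m (FConjs fs) = (\<forall>f\<in>set fs. ok D m f)"
  by (induction fs) (auto simp: empty_D0)

lemma ok_fEqv: "ok D m (fEqv i j) = (i < m \<and> j < m)"
  using DG_D by (auto simp: fEqv_def numeral_2_eq_2)

lemma ok_fRm: "XX \<in> D (Suc n) \<Longrightarrow> \<forall>i\<in>set is. i < n \<Longrightarrow> length is = d \<Longrightarrow> ok D (Suc d) (fRm d n z XX is)"
  unfolding fRm_def fIn_def
  by (auto simp: ok_FExN ok_FConjs ok_fEqv len_xidx dest: set_xidx)

lemma projfam_D:
  assumes XX: "XX \<in> D (Suc n)" and ip: "is \<in> proj_indices n d"
  shows "{r # y |r y. length y = d \<and> (z < r \<and> y \<in> coord_proj is ` fiber XX r)} \<in> D (Suc d)"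
proof -
  have li: "length is = d" and ii: "\<forall>i\<in>set is. i < n" using ip unfolding proj_indices_def by auto
  have e: "(z < r \<and> (\<exists>x. length x = n \<and> r # x \<in> XX \<and> y = map (nth x) is)) = (z < r \<and> y \<in> coord_proj is ` fiber XX r)" for r y
  proof -
    have "(\<exists>x. length x = n \<and> r # x \<in> XX \<and> y = map (nth x) is) = (\<exists>x. r # x \<in> XX \<and> y = map (nth x) is)"
      using D_len[OF S XX] by fastforce
    thus ?thesis unfolding fiber_def coord_proj_def by auto
  qed
  show ?thesis
  proof (rule def_Suc[OF ok_fRm[OF XX ii li, of z]])
    fix r :: 'a and y :: "'a list" assume ly: "length y = d"
    show "ev (fRm d n z XX is) (r # y) = (z < r \<and> y \<in> coord_proj is ` fiber XX r)"
      using ev_fRm[OF ly li, of n z XX r] e[of r y] by simp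
  qed
qed

end

theorem mainTheorem15:
  fixes D :: "nat \<Rightarrow> 'a::{dense_linorder,no_top,no_bot} list set set"
    and z :: 'a and n :: nat and XX :: "'a list set"
  assumes "is_expansion_defsets D"
    and "definably_complete D"
    and "locally_o_minimal D"
    and "XX \<in> D (Suc n)"
    and "\<And>r r'. z < r \<Longrightarrow> r < r' \<Longrightarrow> fiber XX r \<subseteq> fiber XX r'"
  shows "dim n (\<Union>r\<in>{r. z < r}. fiber XX r) = (SUP r\<in>{r. z < r}. dim n (fiber XX r))"
proof -
  interpret L: lom D by (rule lom.intro) (rule assms)+
  define U where "U = (\<Union>r\<in>{r. z < r}. fiber XX r)"
  have ne: "{r. z < r} \<noteq> {}" using gt_ex by blast
  have le: "(SUP r\<in>{r. z < r}. dim n (fiber XX r)) \<le> dim n U"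
    by (rule SUP_least) (rule dim_mono, auto simp: U_def)
  show ?thesis
  proof (cases "U = {}")
    case True
    hence "fiber XX r = {}" if "z < r" for r using that unfolding U_def by blast
    hence "(SUP r\<in>{r. z < r}. dim n (fiber XX r)) = (SUP r\<in>{r. z < r}. (-\<infinity>::ereal))"
      by (intro SUP_cong) (auto simp: dim_DS)
    also have "\<dots> = -\<infinity>" using ne by simp
    finally show ?thesis using True unfolding U_def[symmetric] by (simp add: dim_DS)
  next
    case False
    define dd where "dd = Max (DS n U)"
    have "dd \<in> DS n U" unfolding dd_def using DS_finite DS_zero[OF False] by (intro Max_in) auto
    then obtain "is" a b where ip: "is \<in> proj_indices n dd" and la: "length a = dd" and lb: "length b = dd"
      and ab: "\<forall>k<dd. a ! k < b ! k"
      and bx: "{y. length y = dd \<and> (\<forall>k<dd. a ! k < y ! k \<and> y ! k < b ! k)} \<subseteq> coord_proj is ` U"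
      unfolding DS_def has_interior_def by blast
    have bxU: "box a b \<subseteq> coord_proj is ` U" using bx la unfolding box_def by simp
    define R where "R = {r # y |r y. length y = dd \<and> (z < r \<and> y \<in> coord_proj is ` fiber XX r)}"
    have RD: "R \<in> D (Suc dd)" unfolding R_def by (rule L.projfam_D[OF assms(4) ip])
    have Rmem: "r # y \<in> R \<longleftrightarrow> length y = dd \<and> z < r \<and> y \<in> coord_proj is ` fiber XX r" for r y
      unfolding R_def by blast
    have lbox: "length y = dd" if "y \<in> box a b" for y using that la unfolding box_def by simp
    obtain a' b' s0 where sb: "sub a b a' b'" and s0R: "\<forall>y\<in>box a' b'. s0 # y \<in> R"
    proof -
      have "\<exists>a' b' s0. sub a b a' b' \<and> lc None s0 \<and> (\<forall>y\<in>box a' b'. s0 # y \<in> R)"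
      proof (rule L.BA_use[OF L.BA_all RD la lb ab])
        show "\<forall>y\<in>box a b. \<exists>s. lc None s \<and> s # y \<in> R"
        proof
          fix y assume y: "y \<in> box a b"
          then obtain x where "x \<in> U" "y = coord_proj is x" using bxU by blast
          then obtain r where "z < r" "x \<in> fiber XX r" unfolding U_def by blast
          hence "r # y \<in> R" unfolding Rmem using lbox[OF y] \<open>y = coord_proj is x\<close> by blast
          thus "\<exists>s. lc None s \<and> s # y \<in> R" by (auto simp: lc_def)
        qed
        show "\<forall>y\<in>box a b. \<forall>s s'. s # y \<in> R \<longrightarrow> s \<le> s' \<longrightarrow> lc None s' \<longrightarrow> s' # y \<in> R"
        proof (intro ballI allI impI)
          fix y s s' assume "s # y \<in> R" "s \<le> s'"
          hence A: "length y = dd" "z < s" "y \<in> coord_proj is ` fiber XX s" unfolding Rmem by auto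
          have "fiber XX s \<subseteq> fiber XX s'"
          proof (cases "s = s'")
            case False thus ?thesis using assms(5) A(2) \<open>s \<le> s'\<close> by simp
          qed simp
          moreover have "z < s'" using A(2) \<open>s \<le> s'\<close> by simp
          ultimately show "s' # y \<in> R" unfolding Rmem using A by blast
        qed
      qed
      thus ?thesis using that by blast
    qed
    have la': "length a' = dd" "length b' = dd" and ab': "\<forall>k<dd. a' ! k < b' ! k"
      using sb la unfolding sub_def by auto
    obtain y0 where y0: "y0 \<in> box a' b'" using box_nonempty[of b' a'] la' ab' by auto
    have zs0: "z < s0" using s0R y0 unfolding Rmem by blast
    have bx': "box a' b' \<subseteq> coord_proj is ` fiber XX s0" using s0R unfolding Rmem by blast
    have "has_interior dd (coord_proj is ` fiber XX s0)" unfolding has_interior_def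
      using la' ab' bx' unfolding box_def by (intro exI[of _ a'] exI[of _ b']) auto
    hence dd_in: "dd \<in> DS n (fiber XX s0)" unfolding DS_def using ip by blast
    have fne: "fiber XX s0 \<noteq> {}" using bx' y0 by blast
    have "dim n U = ereal (of_nat dd)" using False unfolding dd_def by (simp add: dim_DS)
    also have "\<dots> \<le> dim n (fiber XX s0)"
      using fne Max_ge[OF DS_finite dd_in] by (simp add: dim_DS)
    also have "\<dots> \<le> (SUP r\<in>{r. z < r}. dim n (fiber XX r))" using zs0 by (intro SUP_upper) auto
    finally show ?thesis using le unfolding U_def by simp
  qed
qed



end
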